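(* Let $\mathcal T$ be an atomic orbital category. For all unital $\mathcal T$-weak indexing systems $\mathcal C,\mathcal D$, we have $\nabla(\mathcal C\vee\mathcal D)=\nabla(\mathcal C)\cup\nabla(\mathcal D)$.
   Context: For a small category $\mathcal T$, $\mathbb F_{\mathcal T}$ is the full subcategory of $\mathrm{Fun}(\mathcal T^{op},\mathrm{Set})$ on finite coproducts of representables; $\mathcal T$ is orbital if $\mathbb F_{\mathcal T}$ has pullbacks, and atomic if every morphism of $\mathcal T$ admitting a section is an isomorphism. $\mathbb F_V:=\mathbb F_{\mathcal T,/V}$, $*_V$ terminal, $n\cdot S$ the $n$-fold coproduct; for $U\to V$, $\mathrm{Res}^V_U$ is pullback and $\mathrm{Ind}^V_U$ postcomposition. A full $\mathcal T$-subcategory assigns isomorphism-closed classes $\mathcal C_V\subseteq\mathrm{Ob}\,\mathbb F_V$ stable under restriction. For $S\in\mathbb F_V$ with orbits $U$ and $T_U\in\mathbb F_U$, $\coprod_U^ST_U:=\coprod_U\mathrm{Ind}_U^VT_U$. A $\mathcal T$-weak indexing system is a full $\mathcal T$-subcategory with $\mathcal C_V\neq\emptyset\Rightarrow *_V\in\mathcal C_V$ and closed under $\coprod^S_UT_U$ for $S\in\mathcal C_V$, $T_U\in\mathcal C_U$; these form a lattice under inclusion with join $\vee$. It is unital if every $\mathcal C_V$ is nonempty and $S\sqcup S'\in\mathcal C_V\Rightarrow S,S'\in\mathcal C_V$. $\nabla(\mathcal C)=\{V\in\mathcal T\mid 2\cdot *_V\in\mathcal C_V\}$. *)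

theory Defs
  imports Main
begin

record ('o,'m) category =
  Ob  :: "'o set"
  Mor :: "'m set"
  Dom :: "'m \<Rightarrow> 'o"
  Cod :: "'m \<Rightarrow> 'o"
  Cmp :: "'m \<Rightarrow> 'm \<Rightarrow> 'm"   (* Cmp g f = g \<circ> f *)
  Idt :: "'o \<Rightarrow> 'm"

definition is_category :: "('o,'m) category \<Rightarrow> bool" where
  "is_category T \<longleftrightarrow>
     (\<forall>f\<in>Mor T. Dom T f \<in> Ob T \<and> Cod T f \<in> Ob T) \<and>
     (\<forall>a\<in>Ob T. Idt T a \<in> Mor T \<and> Dom T (Idt T a) = a \<and> Cod T (Idt T a) = a) \<and>
     (\<forall>f\<in>Mor T. \<forall>g\<in>Mor T. Cod T f = Dom T g \<longrightarrow>
        Cmp T g f \<in> Mor T \<and> Dom T (Cmp T g f) = Dom T f \<and> Cod T (Cmp T g f) = Cod T g) \<and>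
     (\<forall>f\<in>Mor T. Cmp T f (Idt T (Dom T f)) = f \<and> Cmp T (Idt T (Cod T f)) f = f) \<and>
     (\<forall>f\<in>Mor T. \<forall>g\<in>Mor T. \<forall>h\<in>Mor T. Cod T f = Dom T g \<longrightarrow> Cod T g = Dom T h \<longrightarrow>
        Cmp T h (Cmp T g f) = Cmp T (Cmp T h g) f)"

definition cat_iso :: "('o,'m) category \<Rightarrow> 'm \<Rightarrow> bool" where
  "cat_iso T f \<longleftrightarrow> f \<in> Mor T \<and> (\<exists>g\<in>Mor T. Dom T g = Cod T f \<and> Cod T g = Dom T f \<and>
      Cmp T g f = Idt T (Dom T f) \<and> Cmp T f g = Idt T (Cod T f))"

definition atomic :: "('o,'m) category \<Rightarrow> bool" where
  "atomic T \<longleftrightarrow> (\<forall>f\<in>Mor T. (\<exists>s\<in>Mor T. Dom T s = Cod T f \<and> Cod T s = Dom T f \<and>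
       Cmp T f s = Idt T (Cod T f)) \<longrightarrow> cat_iso T f)"

text \<open>An object of F_T is a finite list of objects of T (standing for the coproduct
of the corresponding representables). By the Yoneda lemma and connectedness of
representables, a morphism from the coproduct over xs to the coproduct over ys is a
function phi on indices of xs to indices of ys together with morphisms
g i : xs!i -> ys!(phi i) of T.\<close>

definition fobj :: "('o,'m) category \<Rightarrow> 'o list \<Rightarrow> bool" where
  "fobj T xs \<longleftrightarrow> set xs \<subseteq> Ob T"

definition fhom :: "('o,'m) category \<Rightarrow> 'o list \<Rightarrow> 'o list \<Rightarrow> ((nat \<Rightarrow> nat) \<times> (nat \<Rightarrow> 'm)) set" where
  "fhom T xs ys = {(\<phi>, g).
     (\<forall>i<length xs. \<phi> i < length ys \<and> g i \<in> Mor T \<and> Dom T (g i) = xs ! i \<and> Cod T (g i) = ys ! (\<phi> i)) \<and>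
     (\<forall>i. length xs \<le> i \<longrightarrow> \<phi> i = 0 \<and> g i = undefined)}"

text \<open>Composition b after a, where a has source of length n.\<close>
definition fcomp :: "('o,'m) category \<Rightarrow> nat \<Rightarrow> (nat \<Rightarrow> nat) \<times> (nat \<Rightarrow> 'm)
    \<Rightarrow> (nat \<Rightarrow> nat) \<times> (nat \<Rightarrow> 'm) \<Rightarrow> (nat \<Rightarrow> nat) \<times> (nat \<Rightarrow> 'm)" where
  "fcomp T n b a =
     (\<lambda>i. if i < n then fst b (fst a i) else 0,
      \<lambda>i. if i < n then Cmp T (snd b (fst a i)) (snd a i) else undefined)"

definition fid :: "('o,'m) category \<Rightarrow> 'o list \<Rightarrow> (nat \<Rightarrow> nat) \<times> (nat \<Rightarrow> 'm)" where
  "fid T xs = (\<lambda>i. if i < length xs then i else 0,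
               \<lambda>i. if i < length xs then Idt T (xs ! i) else undefined)"

definition is_pullback :: "('o,'m) category \<Rightarrow> 'o list \<Rightarrow> 'o list \<Rightarrow> 'o list
    \<Rightarrow> (nat \<Rightarrow> nat) \<times> (nat \<Rightarrow> 'm) \<Rightarrow> (nat \<Rightarrow> nat) \<times> (nat \<Rightarrow> 'm)
    \<Rightarrow> (nat \<Rightarrow> nat) \<times> (nat \<Rightarrow> 'm) \<Rightarrow> (nat \<Rightarrow> nat) \<times> (nat \<Rightarrow> 'm) \<Rightarrow> bool" where
  "is_pullback T A B P f g p1 p2 \<longleftrightarrow>
     fobj T P \<and> p1 \<in> fhom T P A \<and> p2 \<in> fhom T P B \<and>
     fcomp T (length P) f p1 = fcomp T (length P) g p2 \<and>
     (\<forall>Q q1 q2. fobj T Q \<and> q1 \<in> fhom T Q A \<and> q2 \<in> fhom T Q B \<and>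
        fcomp T (length Q) f q1 = fcomp T (length Q) g q2 \<longrightarrow>
        (\<exists>!u. u \<in> fhom T Q P \<and> fcomp T (length Q) p1 u = q1 \<and> fcomp T (length Q) p2 u = q2))"

definition orbital :: "('o,'m) category \<Rightarrow> bool" where
  "orbital T \<longleftrightarrow> (\<forall>A B C f g. fobj T A \<and> fobj T B \<and> fobj T C \<and> f \<in> fhom T A C \<and> g \<in> fhom T B C
      \<longrightarrow> (\<exists>P p1 p2. is_pullback T A B P f g p1 p2))"

text \<open>An object of F_V = F_T/V (V an object of T, i.e. the representable [V]) is a pair
(ys, h) where h k : ys!k -> V.\<close>

definition fobj_over :: "('o,'m) category \<Rightarrow> 'o \<Rightarrow> ('o list \<times> (nat \<Rightarrow> 'm)) set" where
  "fobj_over T V = {(ys, h). fobj T ys \<and>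
     (\<forall>k<length ys. h k \<in> Mor T \<and> Dom T (h k) = ys ! k \<and> Cod T (h k) = V) \<and>
     (\<forall>k. length ys \<le> k \<longrightarrow> h k = undefined)}"

definition to_base :: "'o list \<times> (nat \<Rightarrow> 'm) \<Rightarrow> (nat \<Rightarrow> nat) \<times> (nat \<Rightarrow> 'm)" where
  "to_base S = (\<lambda>_. 0, snd S)"

definition fhom_over :: "('o,'m) category \<Rightarrow> 'o list \<times> (nat \<Rightarrow> 'm) \<Rightarrow> 'o list \<times> (nat \<Rightarrow> 'm)
    \<Rightarrow> ((nat \<Rightarrow> nat) \<times> (nat \<Rightarrow> 'm)) set" where
  "fhom_over T S S' = {f \<in> fhom T (fst S) (fst S'). fcomp T (length (fst S)) (to_base S') f = to_base S}"

definition iso_over :: "('o,'m) category \<Rightarrow> 'o list \<times> (nat \<Rightarrow> 'm) \<Rightarrow> 'o list \<times> (nat \<Rightarrow> 'm) \<Rightarrow> bool" where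
  "iso_over T S S' \<longleftrightarrow> (\<exists>f f'. f \<in> fhom_over T S S' \<and> f' \<in> fhom_over T S' S \<and>
      fcomp T (length (fst S)) f' f = fid T (fst S) \<and> fcomp T (length (fst S')) f f' = fid T (fst S'))"

definition star :: "('o,'m) category \<Rightarrow> 'o \<Rightarrow> 'o list \<times> (nat \<Rightarrow> 'm)" where
  "star T V = ([V], \<lambda>k. if k = 0 then Idt T V else undefined)"

definition two_star :: "('o,'m) category \<Rightarrow> 'o \<Rightarrow> 'o list \<times> (nat \<Rightarrow> 'm)" where
  "two_star T V = ([V, V], \<lambda>k. if k < 2 then Idt T V else undefined)"

definition coprod_over :: "'o list \<times> (nat \<Rightarrow> 'm) \<Rightarrow> 'o list \<times> (nat \<Rightarrow> 'm) \<Rightarrow> 'o list \<times> (nat \<Rightarrow> 'm)" where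
  "coprod_over S S' = (fst S @ fst S',
     \<lambda>k. if k < length (fst S) then snd S k else snd S' (k - length (fst S)))"

text \<open>The object coprod_U Ind_U^V T_U, given as a list of pairs (structure map g_i : U_i -> V
of the orbit U_i of S, object T_i of F_{U_i}).\<close>
fun bigcoprod :: "('o,'m) category \<Rightarrow> ('m \<times> ('o list \<times> (nat \<Rightarrow> 'm))) list \<Rightarrow> 'o list \<times> (nat \<Rightarrow> 'm)" where
  "bigcoprod T [] = ([], \<lambda>_. undefined)"
| "bigcoprod T ((m, Y) # rest) =
     (fst Y @ fst (bigcoprod T rest),
      \<lambda>k. if k < length (fst Y) then Cmp T m (snd Y k) else snd (bigcoprod T rest) (k - length (fst Y)))"

definition ind_coprod :: "('o,'m) category \<Rightarrow> 'o list \<times> (nat \<Rightarrow> 'm) \<Rightarrow> (nat \<Rightarrow> 'o list \<times> (nat \<Rightarrow> 'm))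
    \<Rightarrow> 'o list \<times> (nat \<Rightarrow> 'm)" where
  "ind_coprod T S Ts = bigcoprod T (map (\<lambda>i. (snd S i, Ts i)) [0..<length (fst S)])"

type_synonym ('o,'m) tsub = "'o \<Rightarrow> ('o list \<times> (nat \<Rightarrow> 'm)) set"

definition full_Tsub :: "('o,'m) category \<Rightarrow> ('o,'m) tsub \<Rightarrow> bool" where
  "full_Tsub T C \<longleftrightarrow>
     (\<forall>V. V \<notin> Ob T \<longrightarrow> C V = {}) \<and>
     (\<forall>V\<in>Ob T. C V \<subseteq> fobj_over T V) \<and>
     (\<forall>V\<in>Ob T. \<forall>S S'. S \<in> C V \<and> S' \<in> fobj_over T V \<and> iso_over T S S' \<longrightarrow> S' \<in> C V) \<and>
     (\<forall>m\<in>Mor T. \<forall>S P p1 p2. S \<in> C (Cod T m) \<and>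
        is_pullback T (fst S) [Dom T m] P (to_base S) (\<lambda>_. 0, \<lambda>i. if i = 0 then m else undefined) p1 p2
        \<longrightarrow> (P, snd p2) \<in> C (Dom T m))"

definition weak_indexing_system :: "('o,'m) category \<Rightarrow> ('o,'m) tsub \<Rightarrow> bool" where
  "weak_indexing_system T C \<longleftrightarrow> full_Tsub T C \<and>
     (\<forall>V\<in>Ob T. C V \<noteq> {} \<longrightarrow> star T V \<in> C V) \<and>
     (\<forall>V\<in>Ob T. \<forall>S Ts. S \<in> C V \<and> (\<forall>i<length (fst S). Ts i \<in> C (fst S ! i))
        \<longrightarrow> ind_coprod T S Ts \<in> C V)"

definition unital :: "('o,'m) category \<Rightarrow> ('o,'m) tsub \<Rightarrow> bool" where
  "unital T C \<longleftrightarrow> weak_indexing_system T C \<and>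
     (\<forall>V\<in>Ob T. C V \<noteq> {}) \<and>
     (\<forall>V\<in>Ob T. \<forall>S S'. S \<in> fobj_over T V \<and> S' \<in> fobj_over T V \<and> coprod_over S S' \<in> C V
        \<longrightarrow> S \<in> C V \<and> S' \<in> C V)"

definition wis_join :: "('o,'m) category \<Rightarrow> ('o,'m) tsub \<Rightarrow> ('o,'m) tsub \<Rightarrow> ('o,'m) tsub" where
  "wis_join T C D = (\<lambda>V. \<Inter> {E V | E. weak_indexing_system T E \<and> (\<forall>W. C W \<subseteq> E W) \<and> (\<forall>W. D W \<subseteq> E W)})"

definition nabla :: "('o,'m) category \<Rightarrow> ('o,'m) tsub \<Rightarrow> 'o set" where
  "nabla T C = {V \<in> Ob T. two_star T V \<in> C V}"

end

theory Submission
  imports Defs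
begin

lemma cat_ob: "is_category T \<Longrightarrow> f \<in> Mor T \<Longrightarrow> Dom T f \<in> Ob T \<and> Cod T f \<in> Ob T"
  unfolding is_category_def by blast
lemma cat_idt: "is_category T \<Longrightarrow> a \<in> Ob T \<Longrightarrow> Idt T a \<in> Mor T \<and> Dom T (Idt T a) = a \<and> Cod T (Idt T a) = a"
  unfolding is_category_def by blast
lemma cat_cmp: "is_category T \<Longrightarrow> f \<in> Mor T \<Longrightarrow> g \<in> Mor T \<Longrightarrow> Cod T f = Dom T g \<Longrightarrow>
   Cmp T g f \<in> Mor T \<and> Dom T (Cmp T g f) = Dom T f \<and> Cod T (Cmp T g f) = Cod T g"
  unfolding is_category_def by blast
lemma cat_idr: "is_category T \<Longrightarrow> f \<in> Mor T \<Longrightarrow> Cmp T f (Idt T (Dom T f)) = f"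
  unfolding is_category_def by blast
lemma cat_idl: "is_category T \<Longrightarrow> f \<in> Mor T \<Longrightarrow> Cmp T (Idt T (Cod T f)) f = f"
  unfolding is_category_def by blast
lemma cat_assoc: "is_category T \<Longrightarrow> f \<in> Mor T \<Longrightarrow> g \<in> Mor T \<Longrightarrow> h \<in> Mor T \<Longrightarrow>
   Cod T f = Dom T g \<Longrightarrow> Cod T g = Dom T h \<Longrightarrow> Cmp T h (Cmp T g f) = Cmp T (Cmp T h g) f"
  unfolding is_category_def by blast

lemma fcomp_fhom:
  assumes "is_category T" "a \<in> fhom T A B" "b \<in> fhom T B C"
  shows "fcomp T (length A) b a \<in> fhom T A C"
  using assms(2,3) cat_cmp[OF assms(1)] unfolding fhom_def fcomp_def by auto

lemma fcomp_assoc: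
  assumes "is_category T" "a \<in> fhom T A B" "b \<in> fhom T B C" "c \<in> fhom T C D"
  shows "fcomp T (length A) c (fcomp T (length A) b a) = fcomp T (length A) (fcomp T (length B) c b) a"
proof -
  have "\<And>i. i < length A \<Longrightarrow> Cmp T (snd c (fst b (fst a i))) (Cmp T (snd b (fst a i)) (snd a i))
     = Cmp T (Cmp T (snd c (fst b (fst a i))) (snd b (fst a i))) (snd a i)"
    using assms(2,3,4) by (intro cat_assoc[OF assms(1)]) (auto simp: fhom_def)
  moreover have "\<And>i. i < length A \<Longrightarrow> fst a i < length B"
    using assms(2) by (auto simp: fhom_def)
  ultimately show ?thesis unfolding fcomp_def by (auto intro!: ext)
qed

lemma to_base_fhom: "S \<in> fobj_over T V \<Longrightarrow> to_base S \<in> fhom T (fst S) [V]"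
  unfolding fobj_over_def fhom_def to_base_def by auto

definition off :: "('m \<times> ('o list \<times> (nat \<Rightarrow> 'm))) list \<Rightarrow> nat \<Rightarrow> nat" where
  "off L i = sum_list (map (\<lambda>p. length (fst (snd p))) (take i L))"

lemma bigcoprod_decomp:
  "k < length (fst (bigcoprod T L)) \<Longrightarrow> \<exists>i<length L. \<exists>j<length (fst (snd (L!i))). k = off L i + j \<and>
     fst (bigcoprod T L) ! k = fst (snd (L!i)) ! j \<and> snd (bigcoprod T L) k = Cmp T (fst (L!i)) (snd (snd (L!i)) j)"
proof (induction L arbitrary: k)
  case Nil then show ?case by simp
next
  case (Cons p rest)
  obtain m Y where p: "p = (m, Y)" by (cases p)
  show ?case
  proof (cases "k < length (fst Y)")
    case True
    then show ?thesis using p by (intro exI[of _ 0]) (auto simp: off_def nth_append)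
  next
    case False
    then have "k - length (fst Y) < length (fst (bigcoprod T rest))" using Cons.prems p by auto
    from Cons.IH[OF this] obtain i j where ij: "i < length rest" "j < length (fst (snd (rest!i)))"
      "k - length (fst Y) = off rest i + j"
      "fst (bigcoprod T rest) ! (k - length (fst Y)) = fst (snd (rest!i)) ! j"
      "snd (bigcoprod T rest) (k - length (fst Y)) = Cmp T (fst (rest!i)) (snd (snd (rest!i)) j)" by blast
    show ?thesis using False ij p
      by (intro exI[of _ "Suc i"]) (auto simp: off_def nth_append)
  qed
qed

lemma bigcoprod_undef: "length (fst (bigcoprod T L)) \<le> k \<Longrightarrow> snd (bigcoprod T L) k = undefined"
  by (induction L arbitrary: k rule: bigcoprod.induct) auto

lemma bigcoprod_filter:
  assumes "\<forall>i\<in>set xs. \<not> P i \<longrightarrow> Ts i = ([], \<lambda>_. undefined)"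
  shows "bigcoprod T (map (\<lambda>i. (h i, Ts i)) xs) = bigcoprod T (map (\<lambda>i. (h i, Ts i)) (filter P xs))"
  using assms by (induction xs) auto

lemma filter_two: "j < j' \<Longrightarrow> j' < n \<Longrightarrow> filter (\<lambda>i. i = j \<or> i = j') [0..<n] = [j, j']"
proof -
  assume a: "j < j'" "j' < n"
  have "[0..<n] = [0..<j] @ j # [Suc j..<j'] @ j' # [Suc j'..<n]"
    using a by (metis Suc_leI le_add1 less_imp_le_nat upt_add_eq_append upt_conv_Cons add.left_neutral le_add_diff_inverse order.strict_trans)
  then show ?thesis using a by (simp add: filter_empty_conv)
qed


definition islift :: "('o,'m) category \<Rightarrow> 'o list \<times> (nat \<Rightarrow> 'm) \<Rightarrow> 'm \<Rightarrow> nat \<times> 'm \<Rightarrow> bool" where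
  "islift T S m x \<longleftrightarrow> fst x < length (fst S) \<and> snd x \<in> Mor T \<and> Dom T (snd x) = Dom T m \<and>
     Cod T (snd x) = fst S ! fst x \<and> Cmp T (snd S (fst x)) (snd x) = m"

definition Ebig :: "('o,'m) category \<Rightarrow> 'o set \<Rightarrow> ('o,'m) tsub" where
  "Ebig T N V = {S. V \<in> Ob T \<and> S \<in> fobj_over T V \<and> (\<forall>m\<in>Mor T. Cod T m = V \<longrightarrow> Dom T m \<notin> N \<longrightarrow>
      (\<forall>x y. islift T S m x \<longrightarrow> islift T S m y \<longrightarrow> x = y))}"

lemma Ebig_star:
  assumes cat: "is_category T" and V: "V \<in> Ob T"
  shows "star T V \<in> Ebig T N V"
proof -
  have "star T V \<in> fobj_over T V" using cat_idt[OF cat V] V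
    by (auto simp: star_def fobj_over_def fobj_def)
  moreover have "x = y" if "m \<in> Mor T" "Cod T m = V" "islift T (star T V) m x" "islift T (star T V) m y" for m x y
  proof -
    have "fst x = 0" "fst y = 0" using that by (auto simp: islift_def star_def)
    moreover have "snd x = m" "snd y = m" using that cat_idl[OF cat, of "snd x"] cat_idl[OF cat, of "snd y"]
      by (auto simp: islift_def star_def)
    ultimately show ?thesis by (simp add: prod_eq_iff)
  qed
  ultimately show ?thesis using V unfolding Ebig_def by blast
qed

lemma Ebig_iso:
  assumes cat: "is_category T" and S: "S \<in> Ebig T N V" and S': "S' \<in> fobj_over T V" and iso: "iso_over T S S'"
  shows "S' \<in> Ebig T N V"
proof -
  obtain f f' where f: "f \<in> fhom_over T S S'" and f': "f' \<in> fhom_over T S' S"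
    and c1: "fcomp T (length (fst S)) f' f = fid T (fst S)" and c2: "fcomp T (length (fst S')) f f' = fid T (fst S')"
    using iso unfolding iso_over_def by blast
  have V: "V \<in> Ob T" using S by (simp add: Ebig_def)
  have Sfo: "S \<in> fobj_over T V" using S by (simp add: Ebig_def)
  have "x = y" if m: "m \<in> Mor T" "Cod T m = V" "Dom T m \<notin> N" and x: "islift T S' m x" and y: "islift T S' m y" for m x y
  proof -
    define F where "F = (\<lambda>z. (fst f' (fst z), Cmp T (snd f' (fst z)) (snd z)))"
    have liftF: "islift T S m (F z)" if z: "islift T S' m z" for z
    proof -
      have f'h: "fst f' (fst z) < length (fst S)" "snd f' (fst z) \<in> Mor T" "Dom T (snd f' (fst z)) = fst S' ! fst z"
        "Cod T (snd f' (fst z)) = fst S ! fst f' (fst z)"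
        using f' z unfolding fhom_over_def fhom_def islift_def by auto
      have tb: "fcomp T (length (fst S')) (to_base S) f' = to_base S'" using f' by (simp add: fhom_over_def)
      have "Cmp T (snd S (fst f' (fst z))) (snd f' (fst z)) = snd S' (fst z)"
        using fun_cong[OF arg_cong[where f=snd, OF tb], of "fst z"] z
        by (simp add: fcomp_def to_base_def islift_def)
      moreover have "snd S (fst f' (fst z)) \<in> Mor T" "Dom T (snd S (fst f' (fst z))) = fst S ! fst f' (fst z)"
        using Sfo f'h(1) by (auto simp: fobj_over_def)
      ultimately show ?thesis using z f'h cat_cmp[OF cat] cat_assoc[OF cat, of "snd z" "snd f' (fst z)" "snd S (fst f' (fst z))"]
        unfolding islift_def F_def by auto
    qed
    have inj: "z = w" if z: "islift T S' m z" and w: "islift T S' m w" and e: "F z = F w" for z w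
    proof -
      have bk: "(fst f (fst (F z)), Cmp T (snd f (fst (F z))) (snd (F z))) = z" if z: "islift T S' m z" for z
      proof -
        have fh: "fst f' (fst z) < length (fst S)" "snd f' (fst z) \<in> Mor T" "Dom T (snd f' (fst z)) = fst S' ! fst z"
          "Cod T (snd f' (fst z)) = fst S ! fst f' (fst z)"
          using f' z unfolding fhom_over_def fhom_def islift_def by auto
        have fh2: "snd f (fst f' (fst z)) \<in> Mor T" "Dom T (snd f (fst f' (fst z))) = fst S ! fst f' (fst z)"
          using f fh(1) unfolding fhom_over_def fhom_def by auto
        have "fst f (fst f' (fst z)) = fst z" "Cmp T (snd f (fst f' (fst z))) (snd f' (fst z)) = Idt T (fst S' ! fst z)"
          using fun_cong[OF arg_cong[where f=fst, OF c2], of "fst z"] fun_cong[OF arg_cong[where f=snd, OF c2], of "fst z"] z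
          by (auto simp: fcomp_def fid_def islift_def)
        then show ?thesis using z fh fh2 cat_assoc[OF cat, of "snd z" "snd f' (fst z)" "snd f (fst f' (fst z))"]
            cat_idl[OF cat, of "snd z"]
          unfolding F_def islift_def by (auto simp: prod_eq_iff)
      qed
      show ?thesis using bk[OF z] bk[OF w] e by metis
    qed
    have "F x = F y" using S m liftF[OF x] liftF[OF y] unfolding Ebig_def by blast
    then show ?thesis using inj x y by blast
  qed
  then show ?thesis using V S' unfolding Ebig_def by blast
qed


lemma Ebig_res:
  assumes cat: "is_category T" and m: "m \<in> Mor T" and S: "S \<in> Ebig T N (Cod T m)"
    and pb: "is_pullback T (fst S) [Dom T m] P (to_base S) (\<lambda>_. 0, \<lambda>i. if i = 0 then m else undefined) p1 p2"
  shows "(P, snd p2) \<in> Ebig T N (Dom T m)"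
proof -
  define g where "g = (\<lambda>_::nat. 0::nat, \<lambda>i::nat. if i = 0 then m else undefined)"
  have Sfo: "S \<in> fobj_over T (Cod T m)" using S by (simp add: Ebig_def)
  have P: "fobj T P" and p1: "p1 \<in> fhom T P (fst S)" and p2: "p2 \<in> fhom T P [Dom T m]"
    and sq: "fcomp T (length P) (to_base S) p1 = fcomp T (length P) g p2"
    and univ: "\<And>Q q1 q2. fobj T Q \<Longrightarrow> q1 \<in> fhom T Q (fst S) \<Longrightarrow> q2 \<in> fhom T Q [Dom T m] \<Longrightarrow>
        fcomp T (length Q) (to_base S) q1 = fcomp T (length Q) g q2 \<Longrightarrow>
        (\<exists>!u. u \<in> fhom T Q P \<and> fcomp T (length Q) p1 u = q1 \<and> fcomp T (length Q) p2 u = q2)"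
    using pb unfolding is_pullback_def g_def by blast+
  have Dm: "Dom T m \<in> Ob T" using cat_ob[OF cat m] by simp
  have gh: "g \<in> fhom T [Dom T m] [Cod T m]" using m by (auto simp: g_def fhom_def)
  have tbh: "to_base S \<in> fhom T (fst S) [Cod T m]" using to_base_fhom[OF Sfo] .
  have Pfo: "(P, snd p2) \<in> fobj_over T (Dom T m)"
    using P p2 by (auto simp: fobj_over_def fhom_def)
  have "x = y" if m': "m' \<in> Mor T" "Cod T m' = Dom T m" "Dom T m' \<notin> N"
    and x: "islift T (P, snd p2) m' x" and y: "islift T (P, snd p2) m' y" for m' x y
  proof -
    define W where "W = Dom T m'"
    have W: "W \<in> Ob T" using cat_ob[OF cat m'(1)] W_def by simp
    define U where "U = (\<lambda>z::nat \<times> 'b. (\<lambda>i::nat. if i = 0 then fst z else 0, \<lambda>i::nat. if i = 0 then snd z else undefined))"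
    have Uh: "U z \<in> fhom T [W] P" if z: "islift T (P, snd p2) m' z" for z
      using z by (auto simp: U_def fhom_def islift_def W_def)
    have U2: "fcomp T 1 p2 (U z) = (\<lambda>_. 0, \<lambda>i. if i = 0 then m' else undefined)" if z: "islift T (P, snd p2) m' z" for z
    proof -
      have "fst p2 (fst z) = 0" using p2 z by (auto simp: fhom_def islift_def)
      then show ?thesis using z by (auto simp: U_def fcomp_def islift_def intro!: ext)
    qed
    have q2h: "(\<lambda>_::nat. 0::nat, \<lambda>i::nat. if i = 0 then m' else undefined) \<in> fhom T [W] [Dom T m]"
      using m' by (auto simp: fhom_def W_def)
    have U1: "fcomp T 1 p1 (U z) = (\<lambda>i. if i = 0 then fst p1 (fst z) else 0, \<lambda>i. if i = 0 then Cmp T (snd p1 (fst z)) (snd z) else undefined)" for z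
      by (auto simp: U_def fcomp_def intro!: ext)
    have L: "islift T S (Cmp T m m') (fst p1 (fst z), Cmp T (snd p1 (fst z)) (snd z))" if z: "islift T (P, snd p2) m' z" for z
    proof -
      have e: "fcomp T 1 (to_base S) (fcomp T 1 p1 (U z)) = fcomp T 1 g (fcomp T 1 p2 (U z))"
        using fcomp_assoc[OF cat Uh[OF z] p1 tbh] fcomp_assoc[OF cat Uh[OF z] p2 gh] sq by simp
      have "Cmp T (snd S (fst p1 (fst z))) (Cmp T (snd p1 (fst z)) (snd z)) = Cmp T m m'"
        using fun_cong[OF arg_cong[where f=snd, OF e], of 0] unfolding U2[OF z] U1
        by (simp add: fcomp_def to_base_def g_def)
      moreover have "fst p1 (fst z) < length (fst S)" "snd p1 (fst z) \<in> Mor T" "Dom T (snd p1 (fst z)) = P ! fst z"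
        "Cod T (snd p1 (fst z)) = fst S ! fst p1 (fst z)" using p1 z by (auto simp: fhom_def islift_def)
      ultimately show ?thesis using z cat_cmp[OF cat] m' m by (auto simp: islift_def)
    qed
    have "Cmp T m m' \<in> Mor T" "Cod T (Cmp T m m') = Cod T m" "Dom T (Cmp T m m') \<notin> N"
      using cat_cmp[OF cat m'(1) m] m' by auto
    then have eq: "(fst p1 (fst x), Cmp T (snd p1 (fst x)) (snd x)) = (fst p1 (fst y), Cmp T (snd p1 (fst y)) (snd y))"
      using S L[OF x] L[OF y] unfolding Ebig_def by blast
    have c1: "fcomp T 1 p1 (U x) = fcomp T 1 p1 (U y)" using eq unfolding U1 by (simp add: fun_eq_iff)
    have q1h: "fcomp T 1 p1 (U x) \<in> fhom T [W] (fst S)" using fcomp_fhom[OF cat Uh[OF x] p1] by simp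
    have "fcomp T 1 (to_base S) (fcomp T 1 p1 (U x)) = fcomp T 1 g (fcomp T 1 p2 (U x))"
      using fcomp_assoc[OF cat Uh[OF x] p1 tbh] fcomp_assoc[OF cat Uh[OF x] p2 gh] sq by simp
    then have sq1: "fcomp T 1 (to_base S) (fcomp T 1 p1 (U x)) = fcomp T 1 g (\<lambda>_. 0, \<lambda>i. if i = 0 then m' else undefined)"
      using U2[OF x] by metis
    have lenW: "length [W] = 1" by simp
    have fW: "fobj T [W]" using W by (simp add: fobj_def)
    note ex = univ[of "[W]", unfolded lenW, OF fW q1h q2h sq1]
    have Px: "U x \<in> fhom T [W] P \<and> fcomp T 1 p1 (U x) = fcomp T 1 p1 (U x) \<and> fcomp T 1 p2 (U x) = (\<lambda>_. 0, \<lambda>i. if i = 0 then m' else undefined)"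
      using Uh[OF x] U2[OF x] by simp
    have Py: "U y \<in> fhom T [W] P \<and> fcomp T 1 p1 (U y) = fcomp T 1 p1 (U x) \<and> fcomp T 1 p2 (U y) = (\<lambda>_. 0, \<lambda>i. if i = 0 then m' else undefined)"
      using Uh[OF y] U2[OF y] c1 by simp
    have "U x = U y" using the1_equality[OF ex Px] the1_equality[OF ex Py] by simp
    then have "fst (U x) 0 = fst (U y) 0" "snd (U x) 0 = snd (U y) 0" by simp_all
    then show ?thesis unfolding U_def by (simp add: prod_eq_iff)
  qed
  then show ?thesis using Pfo Dm unfolding Ebig_def by blast
qed


lemma Ebig_comp:
  assumes cat: "is_category T" and V: "V \<in> Ob T" and S: "S \<in> Ebig T N V"
    and Ts: "\<forall>i<length (fst S). Ts i \<in> Ebig T N (fst S ! i)"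
  shows "ind_coprod T S Ts \<in> Ebig T N V"
proof -
  define L where "L = map (\<lambda>i. (snd S i, Ts i)) [0..<length (fst S)]"
  define X where "X = bigcoprod T L"
  have X: "ind_coprod T S Ts = X" by (simp add: X_def L_def ind_coprod_def)
  have lenL: "length L = length (fst S)" by (simp add: L_def)
  have Li: "i < length L \<Longrightarrow> L ! i = (snd S i, Ts i)" for i by (simp add: L_def)
  have Sfo: "S \<in> fobj_over T V" using S by (simp add: Ebig_def)
  have Sh: "i < length (fst S) \<Longrightarrow> snd S i \<in> Mor T \<and> Dom T (snd S i) = fst S ! i \<and> Cod T (snd S i) = V" for i
    using Sfo by (auto simp: fobj_over_def)
  have Tfo: "i < length (fst S) \<Longrightarrow> Ts i \<in> fobj_over T (fst S ! i)" for i using Ts by (simp add: Ebig_def)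
  have Th: "i < length (fst S) \<Longrightarrow> j < length (fst (Ts i)) \<Longrightarrow> snd (Ts i) j \<in> Mor T \<and>
     Dom T (snd (Ts i) j) = fst (Ts i) ! j \<and> Cod T (snd (Ts i) j) = fst S ! i \<and> fst (Ts i) ! j \<in> Ob T" for i j
    using Tfo[of i] by (auto simp: fobj_over_def fobj_def)
  have dec: "\<exists>i<length (fst S). \<exists>j<length (fst (Ts i)). k = off L i + j \<and>
     fst X ! k = fst (Ts i) ! j \<and> snd X k = Cmp T (snd S i) (snd (Ts i) j)" if "k < length (fst X)" for k
    using bigcoprod_decomp[of k T L] that Li lenL unfolding X_def by force
  have Xh: "snd X k \<in> Mor T \<and> Dom T (snd X k) = fst X ! k \<and> Cod T (snd X k) = V \<and> fst X ! k \<in> Ob T"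
    if k: "k < length (fst X)" for k
  proof -
    obtain i j where ij: "i < length (fst S)" "j < length (fst (Ts i))" "fst X ! k = fst (Ts i) ! j"
      "snd X k = Cmp T (snd S i) (snd (Ts i) j)" using dec[OF k] by blast
    show ?thesis using ij Th[OF ij(1,2)] Sh[OF ij(1)] cat_cmp[OF cat, of "snd (Ts i) j" "snd S i"] by auto
  qed
  have Xfo: "X \<in> fobj_over T V"
    unfolding fobj_over_def fobj_def using Xh bigcoprod_undef[of T L] unfolding X_def
    by (auto simp: in_set_conv_nth) 
  have "x = y" if m: "m \<in> Mor T" "Cod T m = V" "Dom T m \<notin> N"
    and x: "islift T X m x" and y: "islift T X m y" for m x y
  proof -
    have key: "\<exists>i j. i < length (fst S) \<and> j < length (fst (Ts i)) \<and> fst z = off L i + j \<and>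
       islift T S m (i, Cmp T (snd (Ts i) j) (snd z)) \<and> islift T (Ts i) (Cmp T (snd (Ts i) j) (snd z)) (j, snd z)"
      if z: "islift T X m z" for z
    proof -
      obtain i j where ij: "i < length (fst S)" "j < length (fst (Ts i))" "fst z = off L i + j" "fst X ! fst z = fst (Ts i) ! j"
        "snd X (fst z) = Cmp T (snd S i) (snd (Ts i) j)" using dec[of "fst z"] z unfolding islift_def by blast
      have zz: "snd z \<in> Mor T" "Dom T (snd z) = Dom T m" "Cod T (snd z) = fst (Ts i) ! j"
        "Cmp T (Cmp T (snd S i) (snd (Ts i) j)) (snd z) = m" using z ij by (auto simp: islift_def)
      have "Cmp T (snd S i) (Cmp T (snd (Ts i) j) (snd z)) = m"
        using zz Th[OF ij(1,2)] Sh[OF ij(1)] cat_assoc[OF cat, of "snd z" "snd (Ts i) j" "snd S i"] by auto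
      then show ?thesis using ij zz Th[OF ij(1,2)] Sh[OF ij(1)] cat_cmp[OF cat, of "snd z" "snd (Ts i) j"]
        by (intro exI[of _ i] exI[of _ j]) (auto simp: islift_def)
    qed
    obtain i j where a: "i < length (fst S)" "j < length (fst (Ts i))" "fst x = off L i + j"
       "islift T S m (i, Cmp T (snd (Ts i) j) (snd x))" "islift T (Ts i) (Cmp T (snd (Ts i) j) (snd x)) (j, snd x)"
      using key[OF x] by blast
    obtain i' j' where b: "i' < length (fst S)" "j' < length (fst (Ts i'))" "fst y = off L i' + j'"
       "islift T S m (i', Cmp T (snd (Ts i') j') (snd y))" "islift T (Ts i') (Cmp T (snd (Ts i') j') (snd y)) (j', snd y)"
      using key[OF y] by blast
    have e: "(i, Cmp T (snd (Ts i) j) (snd x)) = (i', Cmp T (snd (Ts i') j') (snd y))"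
      using S m a(4) b(4) unfolding Ebig_def by blast
    then have ii: "i' = i" and gg: "Cmp T (snd (Ts i) j') (snd y) = Cmp T (snd (Ts i) j) (snd x)" by auto
    define g where "g = Cmp T (snd (Ts i) j) (snd x)"
    have gh: "g \<in> Mor T" "Cod T g = fst S ! i" "Dom T g = Dom T m"
      using a(4) a(5) Th[OF a(1,2)] cat_cmp[OF cat, of "snd x" "snd (Ts i) j"] unfolding g_def islift_def by auto
    have "(j, snd x) = (j', snd y)"
      using Ts a(1) gh m(3) a(5) b(5) gg unfolding ii g_def Ebig_def by auto
    then show ?thesis using a(3) b(3) ii by (simp add: prod_eq_iff)
  qed
  then show ?thesis using X Xfo V unfolding Ebig_def by auto
qed

lemma Ebig_wis: assumes cat: "is_category T" shows "weak_indexing_system T (Ebig T N)"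
  unfolding weak_indexing_system_def full_Tsub_def
proof (intro conjI ballI allI impI)
  show "Ebig T N V = {}" if "V \<notin> Ob T" for V using that by (auto simp: Ebig_def)
  show "Ebig T N V \<subseteq> fobj_over T V" for V by (auto simp: Ebig_def)
  show "S' \<in> Ebig T N V" if "S \<in> Ebig T N V \<and> S' \<in> fobj_over T V \<and> iso_over T S S'" for V S S'
    using Ebig_iso[OF cat] that by blast
  show "(P, snd p2) \<in> Ebig T N (Dom T m)" if "m \<in> Mor T" and "S \<in> Ebig T N (Cod T m) \<and>
        is_pullback T (fst S) [Dom T m] P (to_base S) (\<lambda>_. 0, \<lambda>i. if i = 0 then m else undefined) p1 p2" for m S P p1 p2
    using Ebig_res[OF cat] that by blast
  show "star T V \<in> Ebig T N V" if "V \<in> Ob T" for V using Ebig_star[OF cat that] .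
  show "ind_coprod T S Ts \<in> Ebig T N V" if "V \<in> Ob T" "S \<in> Ebig T N V \<and> (\<forall>i<length (fst S). Ts i \<in> Ebig T N (fst S ! i))" for V S Ts
    using Ebig_comp[OF cat] that by blast
qed


lemma section_eq:
  assumes cat: "is_category T" and fm: "f \<in> Mor T" and g: "g \<in> Mor T" "Dom T g = Cod T f" "Cod T g = Dom T f"
      "Cmp T g f = Idt T (Dom T f)"
    and b: "b \<in> Mor T" "Dom T b = Cod T f" "Cod T b = Dom T f" "Cmp T f b = Idt T (Cod T f)"
  shows "b = g"
proof -
  have "b = Cmp T (Idt T (Dom T f)) b" using cat_idl[OF cat b(1)] b by simp
  also have "\<dots> = Cmp T (Cmp T g f) b" using g by simp
  also have "\<dots> = Cmp T g (Cmp T f b)" using cat_assoc[OF cat b(1) fm g(1)] g b by simp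
  also have "\<dots> = Cmp T g (Idt T (Dom T g))" using b g by simp
  also have "\<dots> = g" using cat_idr[OF cat g(1)] .
  finally show ?thesis .
qed

lemma section_unique:
  assumes cat: "is_category T" and f: "cat_iso T f"
    and b: "b \<in> Mor T" "Dom T b = Cod T f" "Cod T b = Dom T f" "Cmp T f b = Idt T (Cod T f)"
    and b': "b' \<in> Mor T" "Dom T b' = Cod T f" "Cod T b' = Dom T f" "Cmp T f b' = Idt T (Cod T f)"
  shows "b = b'"
proof -
  obtain g where g: "g \<in> Mor T" "Dom T g = Cod T f" "Cod T g = Dom T f" "Cmp T g f = Idt T (Dom T f)"
    and fm: "f \<in> Mor T" using f unfolding cat_iso_def by blast
  show ?thesis using section_eq[OF cat fm g b] section_eq[OF cat fm g b'] by simp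
qed

lemma iso_two:
  assumes cat: "is_category T" and X: "X \<in> fobj_over T W" and fX: "fst X = [A, B]"
    and i0: "cat_iso T (snd X 0)" and i1: "cat_iso T (snd X 1)"
  shows "iso_over T X (two_star T W)"
proof -
  have iso: "i < 2 \<Longrightarrow> cat_iso T (snd X i)" for i using i0 i1 by (cases i) (auto simp: less_Suc_eq)
  have Xh: "i < 2 \<Longrightarrow> snd X i \<in> Mor T \<and> Dom T (snd X i) = fst X ! i \<and> Cod T (snd X i) = W" for i
    using X fX by (auto simp: fobj_over_def)
  have Xu: "2 \<le> i \<Longrightarrow> snd X i = undefined" for i using X fX by (auto simp: fobj_over_def)
  have W: "W \<in> Ob T" using Xh[of 0] cat_ob[OF cat] by auto
  define inv where "inv = (\<lambda>i. SOME g. g \<in> Mor T \<and> Dom T g = Cod T (snd X i) \<and> Cod T g = Dom T (snd X i) \<and>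
      Cmp T g (snd X i) = Idt T (Dom T (snd X i)) \<and> Cmp T (snd X i) g = Idt T (Cod T (snd X i)))"
  have invh: "inv i \<in> Mor T \<and> Dom T (inv i) = W \<and> Cod T (inv i) = fst X ! i \<and>
      Cmp T (inv i) (snd X i) = Idt T (fst X ! i) \<and> Cmp T (snd X i) (inv i) = Idt T W" if i: "i < 2" for i
  proof -
    have "\<exists>g. g \<in> Mor T \<and> Dom T g = Cod T (snd X i) \<and> Cod T g = Dom T (snd X i) \<and>
      Cmp T g (snd X i) = Idt T (Dom T (snd X i)) \<and> Cmp T (snd X i) g = Idt T (Cod T (snd X i))"
      using iso[OF i] by (auto simp: cat_iso_def)
    from someI_ex[OF this] show ?thesis using Xh[OF i] unfolding inv_def by simp
  qed
  define f where "f = (\<lambda>i::nat. if i < 2 then i else 0, \<lambda>i. if i < 2 then snd X i else undefined)"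
  define f' where "f' = (\<lambda>i::nat. if i < 2 then i else 0, \<lambda>i. if i < 2 then inv i else undefined)"
  have lX: "length (fst X) = 2" using fX by simp
  have l2: "length (fst (two_star T W)) = 2" by (simp add: two_star_def)
  have t2: "fst (two_star T W) ! i = W" if "i < 2" for i using that by (auto simp: two_star_def less_Suc_eq nth_Cons')
  have snd2: "snd (two_star T W) i = (if i < 2 then Idt T W else undefined)" for i by (simp add: two_star_def)
  have idl: "i < 2 \<Longrightarrow> Cmp T (Idt T W) (snd X i) = snd X i" for i using Xh[of i] cat_idl[OF cat, of "snd X i"] by auto
  have fh: "f \<in> fhom_over T X (two_star T W)"
    unfolding fhom_over_def fhom_def using Xh Xu t2 idl lX l2
    by (auto simp: f_def fcomp_def to_base_def snd2 intro!: ext)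
  have f'h: "f' \<in> fhom_over T (two_star T W) X"
    unfolding fhom_over_def fhom_def using invh Xh Xu t2 lX l2
    by (auto simp: f'_def fcomp_def to_base_def snd2 intro!: ext)
  have c1: "fcomp T (length (fst X)) f' f = fid T (fst X)"
    using invh Xh lX by (auto simp: f_def f'_def fcomp_def fid_def intro!: ext)
  have c2: "fcomp T (length (fst (two_star T W))) f f' = fid T (fst (two_star T W))"
    using invh Xh l2 t2 by (auto simp: f_def f'_def fcomp_def fid_def intro!: ext)
  show ?thesis unfolding iso_over_def using fh f'h c1 c2 by blast
qed


lemma unital_star: "unital T C \<Longrightarrow> U \<in> Ob T \<Longrightarrow> star T U \<in> C U"
  unfolding unital_def weak_indexing_system_def by blast

lemma unital_empty:
  assumes cat: "is_category T" and u: "unital T C" and U: "U \<in> Ob T"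
  shows "([], \<lambda>_. undefined) \<in> C U"
proof -
  have s: "star T U \<in> C U" using unital_star[OF u U] .
  have e: "coprod_over ([], \<lambda>_. undefined) (star T U) = star T U"
    by (simp add: coprod_over_def)
  have "([], \<lambda>_. undefined) \<in> fobj_over T U" by (simp add: fobj_over_def fobj_def)
  moreover have "star T U \<in> fobj_over T U" using cat_idt[OF cat U] U
    by (auto simp: star_def fobj_over_def fobj_def)
  ultimately show ?thesis using u U s e unfolding unital_def by metis
qed

lemma C_sub_Ebig:
  assumes cat: "is_category T" and orb: "orbital T" and at: "atomic T" and u: "unital T C"
    and NC: "nabla T C \<subseteq> N" and S: "S \<in> C V"
  shows "S \<in> Ebig T N V"
proof -
  have wis: "weak_indexing_system T C" using u by (simp add: unital_def)
  then have full: "full_Tsub T C" by (simp add: weak_indexing_system_def)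
  have V: "V \<in> Ob T" using full S unfolding full_Tsub_def by blast
  have Sfo: "S \<in> fobj_over T V" using full S V unfolding full_Tsub_def by blast
  have "x = y" if m: "m \<in> Mor T" "Cod T m = V" "Dom T m \<notin> N"
    and x: "islift T S m x" and y: "islift T S m y" for m x y
  proof (rule ccontr)
    assume xy: "x \<noteq> y"
    define W where "W = Dom T m"
    have W: "W \<in> Ob T" using cat_ob[OF cat m(1)] W_def by simp
    define g where "g = (\<lambda>_::nat. 0::nat, \<lambda>i::nat. if i = 0 then m else undefined)"
    have gh: "g \<in> fhom T [W] [V]" using m by (auto simp: g_def fhom_def W_def)
    have tbh: "to_base S \<in> fhom T (fst S) [V]" using to_base_fhom[OF Sfo] .
    have fS: "fobj T (fst S)" using Sfo by (auto simp: fobj_over_def)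
    obtain P p1 p2 where pb: "is_pullback T (fst S) [W] P (to_base S) g p1 p2"
    proof -
      have "fobj T [W]" "fobj T [V]" using W V by (auto simp: fobj_def)
      then have "\<exists>P p1 p2. is_pullback T (fst S) [W] P (to_base S) g p1 p2"
        using orb gh tbh fS unfolding orbital_def by blast
      then show ?thesis using that by blast
    qed
    have P: "fobj T P" and p1: "p1 \<in> fhom T P (fst S)" and p2: "p2 \<in> fhom T P [W]"
      and univ: "\<And>Q q1 q2. fobj T Q \<Longrightarrow> q1 \<in> fhom T Q (fst S) \<Longrightarrow> q2 \<in> fhom T Q [W] \<Longrightarrow>
        fcomp T (length Q) (to_base S) q1 = fcomp T (length Q) g q2 \<Longrightarrow>
        (\<exists>!u. u \<in> fhom T Q P \<and> fcomp T (length Q) p1 u = q1 \<and> fcomp T (length Q) p2 u = q2)"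
      using pb unfolding is_pullback_def by blast+
    have PC: "(P, snd p2) \<in> C W"
      using full m S pb unfolding full_Tsub_def W_def g_def by blast
    have h: "j < length P \<Longrightarrow> snd p2 j \<in> Mor T \<and> Dom T (snd p2 j) = P ! j \<and> Cod T (snd p2 j) = W \<and> P ! j \<in> Ob T" for j
      using p2 P by (auto simp: fhom_def fobj_def)
    define q1 where "q1 = (\<lambda>z::nat \<times> 'b. (\<lambda>i::nat. if i = 0 then fst z else 0, \<lambda>i::nat. if i = 0 then snd z else undefined))"
    define q2 where "q2 = (\<lambda>_::nat. 0::nat, \<lambda>i::nat. if i = 0 then Idt T W else undefined)"
    have lenW: "length [W] = 1" by simp
    have fW: "fobj T [W]" using W by (simp add: fobj_def)
    have q2h: "q2 \<in> fhom T [W] [W]" using cat_idt[OF cat W] by (auto simp: q2_def fhom_def)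
    have getu: "\<exists>u. u \<in> fhom T [W] P \<and> fcomp T 1 p1 u = q1 z \<and> fcomp T 1 p2 u = q2" if z: "islift T S m z" for z
    proof -
      have q1h: "q1 z \<in> fhom T [W] (fst S)" using z by (auto simp: q1_def fhom_def islift_def W_def)
      have "Cmp T m (Idt T W) = m" using cat_idr[OF cat m(1)] W_def by simp
      then have sq: "fcomp T 1 (to_base S) (q1 z) = fcomp T 1 g q2"
        using z by (auto simp: q1_def q2_def g_def fcomp_def to_base_def islift_def intro!: ext)
      show ?thesis using univ[of "[W]", unfolded lenW, OF fW q1h q2h sq] by blast
    qed
    have uprop: "fst u 0 < length P \<and> snd u 0 \<in> Mor T \<and> Dom T (snd u 0) = W \<and> Cod T (snd u 0) = P ! fst u 0 \<and>
        Cmp T (snd p2 (fst u 0)) (snd u 0) = Idt T W \<and> cat_iso T (snd p2 (fst u 0))"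
      if u: "u \<in> fhom T [W] P" "fcomp T 1 p2 u = q2" for u
    proof -
      have a: "fst u 0 < length P" "snd u 0 \<in> Mor T" "Dom T (snd u 0) = W" "Cod T (snd u 0) = P ! fst u 0"
        using u(1) by (auto simp: fhom_def)
      have b: "Cmp T (snd p2 (fst u 0)) (snd u 0) = Idt T W"
        using fun_cong[OF arg_cong[where f=snd, OF u(2)], of 0] by (simp add: fcomp_def q2_def)
      have "\<exists>s\<in>Mor T. Dom T s = Cod T (snd p2 (fst u 0)) \<and> Cod T s = Dom T (snd p2 (fst u 0)) \<and>
          Cmp T (snd p2 (fst u 0)) s = Idt T (Cod T (snd p2 (fst u 0)))"
        using h[OF a(1)] a b by (intro bexI[of _ "snd u 0"]) auto
      then have "cat_iso T (snd p2 (fst u 0))"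
        using at h[OF a(1)] unfolding atomic_def by blast
      then show ?thesis using a b by blast
    qed
    obtain ux where ux: "ux \<in> fhom T [W] P" "fcomp T 1 p1 ux = q1 x" "fcomp T 1 p2 ux = q2" using getu[OF x] by blast
    obtain uy where uy: "uy \<in> fhom T [W] P" "fcomp T 1 p1 uy = q1 y" "fcomp T 1 p2 uy = q2" using getu[OF y] by blast
    note px = uprop[OF ux(1) ux(3)] and py = uprop[OF uy(1) uy(3)]
    have neq: "fst ux 0 \<noteq> fst uy 0"
    proof
      assume e: "fst ux 0 = fst uy 0"
      have "snd ux 0 = snd uy 0"
        using section_unique[OF cat, of "snd p2 (fst ux 0)" "snd ux 0" "snd uy 0"] px py h[of "fst ux 0"] e by auto
      moreover have "fst ux i = fst uy i \<and> snd ux i = snd uy i" if "i \<noteq> 0" for i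
        using that ux(1) uy(1) unfolding fhom_def by (cases ux, cases uy) auto
      ultimately have "ux = uy" using e by (metis prod_eqI ext)
      then have "q1 x = q1 y" using ux uy by simp
      then have "fst (q1 x) 0 = fst (q1 y) 0" "snd (q1 x) 0 = snd (q1 y) 0" by simp_all
      then show False using xy by (simp add: q1_def prod_eq_iff)
    qed
    define lo where "lo = min (fst ux 0) (fst uy 0)"
    define hi where "hi = max (fst ux 0) (fst uy 0)"
    have lohi: "lo < hi" "hi < length P" "cat_iso T (snd p2 lo)" "cat_iso T (snd p2 hi)"
      using neq px py unfolding lo_def hi_def by (auto simp: min_def max_def)
    define Ts where "Ts = (\<lambda>i. if i = lo \<or> i = hi then star T (P ! i) else ([], \<lambda>_. undefined))"
    have TsC: "\<forall>i<length (fst (P, snd p2)). Ts i \<in> C (fst (P, snd p2) ! i)"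
      proof (intro allI impI)
      fix i assume "i < length (fst (P, snd p2))"
      then have "P ! i \<in> Ob T" using h[of i] by simp
      then show "Ts i \<in> C (fst (P, snd p2) ! i)"
        using unital_star[OF u] unital_empty[OF cat u] unfolding Ts_def by simp
    qed
    have XC: "ind_coprod T (P, snd p2) Ts \<in> C W"
      using wis W PC TsC unfolding weak_indexing_system_def by blast
    have "ind_coprod T (P, snd p2) Ts = bigcoprod T (map (\<lambda>i. (snd p2 i, Ts i)) (filter (\<lambda>i. i = lo \<or> i = hi) [0..<length P]))"
      unfolding ind_coprod_def by (simp add: bigcoprod_filter Ts_def)
    also have "\<dots> = bigcoprod T [(snd p2 lo, star T (P ! lo)), (snd p2 hi, star T (P ! hi))]"
      using filter_two[OF lohi(1,2)] by (simp add: Ts_def)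
    finally have Xe: "ind_coprod T (P, snd p2) Ts = bigcoprod T [(snd p2 lo, star T (P ! lo)), (snd p2 hi, star T (P ! hi))]" .
    define X where "X = ind_coprod T (P, snd p2) Ts"
    have fX: "fst X = [P ! lo, P ! hi]" unfolding X_def Xe by (simp add: star_def)
    have sX0: "snd X 0 = Cmp T (snd p2 lo) (Idt T (P ! lo))" "snd X 1 = Cmp T (snd p2 hi) (Idt T (P ! hi))"
      unfolding X_def Xe by (simp_all add: star_def)
    have sX: "snd X 0 = snd p2 lo" "snd X 1 = snd p2 hi"
    proof -
      have "lo < length P" using lohi by simp
      then have "Cmp T (snd p2 lo) (Idt T (P ! lo)) = snd p2 lo" using h[of lo] cat_idr[OF cat, of "snd p2 lo"] by simp
      moreover have "Cmp T (snd p2 hi) (Idt T (P ! hi)) = snd p2 hi" using lohi h[of hi] cat_idr[OF cat, of "snd p2 hi"] by simp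
      ultimately show "snd X 0 = snd p2 lo" "snd X 1 = snd p2 hi" using sX0 by simp_all
    qed
    have Xfo: "X \<in> fobj_over T W" using full XC W unfolding full_Tsub_def X_def by blast
    have isoX: "iso_over T X (two_star T W)" using iso_two[OF cat Xfo fX] sX lohi by simp
    have "two_star T W \<in> fobj_over T W" using cat_idt[OF cat W] W
      by (auto simp: two_star_def fobj_over_def fobj_def nth_Cons')
    then have "two_star T W \<in> C W" using full XC W isoX unfolding full_Tsub_def X_def by blast
    then have "W \<in> nabla T C" using W by (simp add: nabla_def)
    then show False using NC m(3) W_def by blast
  qed
  then show ?thesis using V Sfo unfolding Ebig_def by blast
qed


theorem mainTheorem17:
  fixes T :: "('o,'m) category" and C D :: "('o,'m) tsub"
  assumes "is_category T" and "orbital T" and "atomic T"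
    and "unital T C" and "unital T D"
  shows "nabla T (wis_join T C D) = nabla T C \<union> nabla T D"
proof -
  note cat = assms(1)
  define N where "N = nabla T C \<union> nabla T D"
  define E where "E = Ebig T N"
  have wE: "weak_indexing_system T E" unfolding E_def using Ebig_wis[OF cat] .
  have CE: "\<forall>W. C W \<subseteq> E W" unfolding E_def using C_sub_Ebig[OF assms(1,2,3,4), of N] N_def by blast
  have DE: "\<forall>W. D W \<subseteq> E W" unfolding E_def using C_sub_Ebig[OF assms(1,2,3,5), of N] N_def by blast
  have JE: "wis_join T C D V \<subseteq> E V" for V unfolding wis_join_def using wE CE DE by blast
  have CJ: "C V \<subseteq> wis_join T C D V" for V unfolding wis_join_def by blast
  have DJ: "D V \<subseteq> wis_join T C D V" for V unfolding wis_join_def by blast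
  show ?thesis
  proof
    show "nabla T C \<union> nabla T D \<subseteq> nabla T (wis_join T C D)"
      using CJ DJ unfolding nabla_def by blast
    show "nabla T (wis_join T C D) \<subseteq> nabla T C \<union> nabla T D"
    proof
      fix V assume "V \<in> nabla T (wis_join T C D)"
      then have V: "V \<in> Ob T" and t: "two_star T V \<in> E V" using JE unfolding nabla_def by auto
      show "V \<in> nabla T C \<union> nabla T D"
      proof (rule ccontr)
        assume "V \<notin> nabla T C \<union> nabla T D"
        then have VN: "Dom T (Idt T V) \<notin> N" using cat_idt[OF cat V] N_def by simp
        have i: "Idt T V \<in> Mor T" "Cod T (Idt T V) = V" "Dom T (Idt T V) = V" using cat_idt[OF cat V] by auto
        have ii: "Cmp T (Idt T V) (Idt T V) = Idt T V" using cat_idl[OF cat i(1)] i by simp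
        have "islift T (two_star T V) (Idt T V) (0, Idt T V)" "islift T (two_star T V) (Idt T V) (1, Idt T V)"
          using i ii by (auto simp: islift_def two_star_def)
        then have "(0::nat, Idt T V) = (1, Idt T V)" using t i VN unfolding E_def Ebig_def by blast
        then show False by simp
      qed
    qed
  qed
qed

end
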